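(* Let $x(z)$ be a holomorphic function on an open set $\Omega\subset\mathbf{C}$ with $\ddot{x}=d^2x/dz^2$ not identically zero, and define the meromorphic function $f(z)=z+2\dot{x}(z)/\ddot{x}(z)$, where $\dot{x}=dx/dz$. If $g\in PSL(2,\mathbf{C})$, acting by Möbius transformation, satisfies $g(\Omega)=\Omega$ and $x(gz)=x(z)$, then $f$ is covariant under $g$: $f(g(z))=g(f(z))$.
   Context: In the paper, $x(z)$ is the inverse of the Schwarz map $S$ of the hypergeometric equation restricted to the upper half-plane, and $f=DS\circ S^{-1}$ is expressed as $f(z)=z+2\dot{x}/\ddot{x}$, where $DS$ is the derived Schwarz map. *)

theory Defs
  imports "HOL-Complex_Analysis.Complex_Analysis"
begin

text \<open>Moebius transformation of a representative (a,b,c,d) of an element of PSL(2,C).\<close>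
definition moebius :: "complex \<Rightarrow> complex \<Rightarrow> complex \<Rightarrow> complex \<Rightarrow> complex \<Rightarrow> complex" where
  "moebius a b c d z = (a * z + b) / (c * z + d)"

definition schwarz_f :: "(complex \<Rightarrow> complex) \<Rightarrow> complex \<Rightarrow> complex" where
  "schwarz_f x z = z + 2 * deriv x z / deriv (deriv x) z"

end

theory Submission
  imports Defs
begin

lemma chain_eq:
  fixes F H G :: "complex \<Rightarrow> complex"
  assumes "open S" "F holomorphic_on S" "z \<in> S" "G z \<in> S"
    and "(G has_field_derivative G') (at z)"
    and "(H has_field_derivative H') (at z)"
    and "\<forall>w\<in>S. F (G w) = H w"
  shows "deriv F (G z) * G' = H'"
proof -
  have "(F has_field_derivative deriv F (G z)) (at (G z))"
    using assms by (meson holomorphic_derivI)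
  then have "((\<lambda>w. F (G w)) has_field_derivative deriv F (G z) * G') (at z)"
    using assms(5) DERIV_chain2 by blast
  then have "(H has_field_derivative deriv F (G z) * G') (at z)"
    using has_field_derivative_transform_within_open[of "\<lambda>w. F (G w)" _ z S H] assms by auto
  then show ?thesis using assms(6) DERIV_unique by blast
qed

lemma moeb_deriv:
  assumes "a * d - b * c = 1" "c * z + d \<noteq> 0"
  shows "(moebius a b c d has_field_derivative 1 / (c * z + d)^2) (at z)"
proof -
  have "((\<lambda>z. (a * z + b) / (c * z + d)) has_field_derivative
     (a * (c*z+d) - (a*z+b) * c) / ((c * z + d) * (c*z+d))) (at z)"
    by (rule derivative_eq_intros refl | use assms in auto)+
  moreover have "(a * (c*z+d) - (a*z+b) * c) / ((c * z + d) * (c*z+d)) = 1 / (c * z + d)^2"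
    using assms by (simp add: power2_eq_square algebra_simps)
  ultimately show ?thesis unfolding moebius_def[abs_def] by simp
qed

theorem proposition3p1:
  fixes x :: "complex \<Rightarrow> complex" and \<Omega> :: "complex set" and a b c d :: complex
  assumes "open \<Omega>"
    and "x holomorphic_on \<Omega>"
    and "\<exists>z\<in>\<Omega>. deriv (deriv x) z \<noteq> 0"
    and "a * d - b * c = 1"
    and "\<forall>z\<in>\<Omega>. c * z + d \<noteq> 0"
    and "moebius a b c d ` \<Omega> = \<Omega>"
    and "\<forall>z\<in>\<Omega>. x (moebius a b c d z) = x z"
  shows "\<forall>z\<in>\<Omega>. deriv (deriv x) z \<noteq> 0 \<longrightarrow>
            deriv (deriv x) (moebius a b c d z) \<noteq> 0 \<longrightarrow>
            c * schwarz_f x z + d \<noteq> 0 \<longrightarrow>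
            schwarz_f x (moebius a b c d z) = moebius a b c d (schwarz_f x z)"
proof (intro ballI impI)
  define g where "g = moebius a b c d"
  define x1 where "x1 = deriv x"
  define x2 where "x2 = deriv x1"
  have gS: "g w \<in> \<Omega>" if "w \<in> \<Omega>" for w using assms(6) that g_def by blast
  have h1: "x1 holomorphic_on \<Omega>" unfolding x1_def using assms(1,2) holomorphic_deriv by blast
  have gd: "(g has_field_derivative 1 / (c * w + d)^2) (at w)" if "w \<in> \<Omega>" for w
    unfolding g_def using moeb_deriv assms(4,5) that by blast
  have e1: "x1 (g w) = x1 w * (c*w+d)^2" if "w \<in> \<Omega>" for w
  proof -
    have "x1 (g w) * (1 / (c * w + d)^2) = x1 w"
      unfolding x1_def
      by (rule chain_eq[OF assms(1,2) that gS[OF that] gd[OF that]])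
         (use assms(1,2) that g_def assms(7) in \<open>auto intro: holomorphic_derivI\<close>)
    then show ?thesis using assms(5) that by (auto simp: field_simps)
  qed
  fix z assume z: "z \<in> \<Omega>" and q: "deriv (deriv x) z \<noteq> 0"
     and qw: "deriv (deriv x) (moebius a b c d z) \<noteq> 0" and cf: "c * schwarz_f x z + d \<noteq> 0"
  define e where "e = c*z+d"
  have e0: "e \<noteq> 0" using assms(5) z e_def by auto
  have dr: "((\<lambda>w. x1 w * (c*w+d)^2) has_field_derivative x2 z * e^2 + x1 z * (2 * e * c)) (at z)"
    unfolding e_def x2_def
    by (rule derivative_eq_intros refl holomorphic_derivI[OF h1 assms(1) z] | simp)+
  have "x2 (g z) * (1 / e^2) = x2 z * e^2 + x1 z * (2 * e * c)"
    unfolding x2_def e_def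
    by (rule chain_eq[OF assms(1) h1 z gS[OF z] gd[OF z] dr[unfolded e_def x2_def]])
       (use e1 in auto)
  then have e2: "x2 (g z) = e^4 * x2 z + 2 * c * e^3 * x1 z"
    using e0 by (auto simp: field_simps power2_eq_square power3_eq_cube power4_eq_xxxx)
  have e1z: "x1 (g z) = x1 z * e^2" using e1 z e_def by simp
  have gz: "g z = (a*z+b)/e" unfolding g_def moebius_def e_def by simp
  have q': "x2 z \<noteq> 0" using q x2_def x1_def by simp
  have e2': "x2 (g z) = e^3 * (e * x2 z + 2 * c * x1 z)"
    using e2 by (simp add: power3_eq_cube power4_eq_xxxx algebra_simps)
  have qw': "e * x2 z + 2 * c * x1 z \<noteq> 0"
    using qw e2' unfolding g_def x2_def x1_def by auto
  have main: "(a*z+b)/e + 2*(p*e^2)/(e^3*(e*q + 2*c*p)) = (a*(z + 2*p/q) + b)/(c*(z+2*p/q)+d)"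
    if "q \<noteq> 0" "e*q + 2*c*p \<noteq> 0" for p q
  proof -
    have r: "(a*(z + 2*p/q) + b)/(c*(z+2*p/q)+d) = ((a*z+b)*q + 2*a*p)/(e*q+2*c*p)"
    proof -
      have n: "a*(z + 2*p/q) + b = ((a*z+b)*q + 2*a*p)/q" using that by (simp add: field_simps)
      have m: "c*(z+2*p/q)+d = (e*q+2*c*p)/q" using that unfolding e_def by (simp add: field_simps)
      show ?thesis unfolding n m using that by simp
    qed
    have l: "(a*z+b)/e + 2*(p*e^2)/(e^3*(e*q + 2*c*p)) = ((a*z+b)*(e*q+2*c*p) + 2*p)/(e*(e*q+2*c*p))"
    proof -
      have t: "2*(p*e^2)/(e^3*(e*q + 2*c*p)) = 2*p/(e*(e*q + 2*c*p))"
        using e0 by (simp add: power2_eq_square power3_eq_cube)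
      define D where "D = e*q + 2*c*p"
      have D0: "D \<noteq> 0" using that D_def by simp
      have "(a*z+b)/e + 2*p/(e*D) = ((a*z+b)*D)/(e*D) + 2*p/(e*D)"
        using D0 by simp
      also have "\<dots> = ((a*z+b)*D + 2*p)/(e*D)" by (simp add: add_divide_distrib)
      finally have "(a*z+b)/e + 2*p/(e*(e*q + 2*c*p)) = ((a*z+b)*(e*q + 2*c*p) + 2*p)/(e*(e*q + 2*c*p))"
        unfolding D_def .
      then show ?thesis unfolding t .
    qed
    have "((a*z+b)*(e*q+2*c*p) + 2*p) = e * ((a*z+b)*q + 2*a*p)"
    proof -
      have "((a*z+b)*(e*q+2*c*p) + 2*p) - e * ((a*z+b)*q + 2*a*p) = 2*p*(c*b + 1 - a*d)"
        unfolding e_def by (simp add: algebra_simps)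
      also have "\<dots> = 0" using assms(4) by (simp add: algebra_simps)
      finally show ?thesis by simp
    qed
    then show ?thesis using l r e0 that by simp
  qed
  show "schwarz_f x (moebius a b c d z) = moebius a b c d (schwarz_f x z)"
    using main[OF q' qw'] e2' e1z gz
    unfolding schwarz_f_def moebius_def[of a b c d "_ + _"] g_def x1_def x2_def
    by simp
qed

end
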